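(* For every integer $n$, \[ 25\sum_{k=1}^n F_k^{\,4}=F_{2n+1}L_{n-1}L_{n+2}+6n+3\,. \]
   Context: $F_i$ and $L_i$ denote the Fibonacci and Lucas numbers, defined for all $i\in\mathbb{Z}$ by $F_i=F_{i-1}+F_{i-2}$, $F_0=0$, $F_1=1$, and $L_i=L_{i-1}+L_{i-2}$, $L_0=2$, $L_1=1$; equivalently $F_{-i}=(-1)^{i-1}F_i$ and $L_{-i}=(-1)^iL_i$. Summation convention for an arbitrary integer upper limit: $\sum_{k=a}^{a-1} f(k)=0$, and for $n<a-1$, $\sum_{k=a}^{n} f(k) = -\sum_{k=n+1}^{a-1} f(k)$. *)

theory Defs
  imports Main
begin

fun fibn :: "nat \<Rightarrow> int" where
  "fibn 0 = 0" | "fibn (Suc 0) = 1" | "fibn (Suc (Suc n)) = fibn (Suc n) + fibn n"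

fun lucn :: "nat \<Rightarrow> int" where
  "lucn 0 = 2" | "lucn (Suc 0) = 1" | "lucn (Suc (Suc n)) = lucn (Suc n) + lucn n"

definition F :: "int \<Rightarrow> int" where
  "F i = (if i \<ge> 0 then fibn (nat i) else (-1) ^ (nat (-i) + 1) * fibn (nat (-i)))"

definition L :: "int \<Rightarrow> int" where
  "L i = (if i \<ge> 0 then lucn (nat i) else (-1) ^ nat (-i) * lucn (nat (-i)))"

text \<open>Sum with arbitrary integer upper limit: sum_{k=a}^{n} f k, with the
  convention sum_{k=a}^{a-1} = 0 and, for n < a-1,
  sum_{k=a}^{n} f k = - sum_{k=n+1}^{a-1} f k.\<close>
definition isum :: "int \<Rightarrow> int \<Rightarrow> (int \<Rightarrow> 'b::ab_group_add) \<Rightarrow> 'b" where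
  "isum a n f = (if n \<ge> a - 1 then sum f {a..n} else - sum f {n+1..a-1})"

end

theory Submission
  imports Defs
begin

lemma F_rec: "F (i+2) = F (i+1) + F i"
proof -
  consider "i \<ge> 0" | "i = -1" | "i = -2" | "i \<le> -3" by linarith
  then show ?thesis
  proof cases
    case 1
    then obtain m where m: "i = int m" by (metis nonneg_eq_int)
    have "nat (int m + 2) = Suc (Suc m)" "nat (int m + 1) = Suc m" by auto
    then show ?thesis using m by (simp add: F_def)
  next
    case 2 then show ?thesis by (simp add: F_def)
  next
    case 3 then show ?thesis by (simp add: F_def numeral_eq_Suc)
  next
    case 4
    define m where "m = nat (-i-3)"
    have m: "i = - int m - 3" using 4 m_def by simp
    have e: "nat (-(i+2)) = Suc m" "nat (-(i+1)) = Suc (Suc m)" "nat (-i) = Suc (Suc (Suc m))"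
      using m by auto
    show ?thesis using 4 e by (simp add: F_def algebra_simps)
  qed
qed

lemma L_rec: "L (i+2) = L (i+1) + L i"
proof -
  consider "i \<ge> 0" | "i = -1" | "i = -2" | "i \<le> -3" by linarith
  then show ?thesis
  proof cases
    case 1
    then obtain m where m: "i = int m" by (metis nonneg_eq_int)
    have "nat (int m + 2) = Suc (Suc m)" "nat (int m + 1) = Suc m" by auto
    then show ?thesis using m by (simp add: L_def)
  next
    case 2 then show ?thesis by (simp add: L_def)
  next
    case 3 then show ?thesis by (simp add: L_def numeral_eq_Suc)
  next
    case 4
    define m where "m = nat (-i-3)"
    have m: "i = - int m - 3" using 4 m_def by simp
    have e: "nat (-(i+2)) = Suc m" "nat (-(i+1)) = Suc (Suc m)" "nat (-i) = Suc (Suc (Suc m))"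
      using m by auto
    show ?thesis using 4 e by (simp add: L_def algebra_simps)
  qed
qed

lemma rec_unique:
  fixes f g :: "int \<Rightarrow> int"
  assumes rf: "\<And>i. f (i+2) = f (i+1) + f i" and rg: "\<And>i. g (i+2) = g (i+1) + g i"
    and 0: "f 0 = g 0" and 1: "f 1 = g 1"
  shows "f i = g i"
proof -
  have "f i = g i \<and> f (i+1) = g (i+1)"
  proof (induct i rule: int_induct[where k=0])
    case base then show ?case using 0 1 by simp
  next
    case (step1 i)
    then show ?case using rf[of i] rg[of i] by (simp add: add.assoc)
  next
    case (step2 i)
    then show ?case using rf[of "i-1"] rg[of "i-1"] by (simp add: algebra_simps)
  qed
  then show ?thesis by simp
qed

lemma const_int:
  fixes h :: "int \<Rightarrow> int"
  assumes "\<And>i. h (i+1) = h i"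
  shows "h i = h 0"
proof (induct i rule: int_induct[where k=0])
  case (step2 i) then show ?case using assms[of "i-1"] by simp
qed (use assms in auto)

lemma F0: "F 0 = 0" and F1: "F 1 = 1" and L0: "L 0 = 2" and L1: "L 1 = 1"
  by (simp_all add: F_def L_def)



lemma Fm1: "F (i - 1) = F (i+1) - F i"
  using F_rec[of "i-1"] by (simp add: algebra_simps)

lemma L_F: "L i = F (i-1) + F (i+1)"
proof (rule rec_unique[where f=L and g="\<lambda>i. F (i-1) + F (i+1)"])
  fix i show "F (i + 2 - 1) + F (i + 2 + 1) = F (i + 1 - 1) + F (i + 1 + 1) + (F (i - 1) + F (i + 1))"
    using F_rec[of "i-1"] F_rec[of "i+1"] by (simp add: algebra_simps)
qed (auto simp: L_rec F0 F1 L0 L1 F_def numeral_2_eq_2)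

lemma F_add: "F (m+k) = F m * F (k+1) + F (m-1) * F k"
proof (rule rec_unique[where f="\<lambda>k. F (m+k)" and g="\<lambda>k. F m * F (k+1) + F (m-1) * F k"])
  fix i show "F (m + (i + 2)) = F (m + (i + 1)) + F (m + i)"
    using F_rec[of "m+i"] by (simp add: algebra_simps)
next
  fix i show "F m * F (i + 2 + 1) + F (m - 1) * F (i + 2) =
         F m * F (i + 1 + 1) + F (m - 1) * F (i + 1) + (F m * F (i + 1) + F (m - 1) * F i)"
    using F_rec[of "i+1"] F_rec[of i] by (simp add: algebra_simps)
next
  show "F (m + 1) = F m * F (1 + 1) + F (m - 1) * F 1"
    using F_rec[of "m-1"] F_rec[of 0] by (simp add: F0 F1 algebra_simps)
qed (simp add: F0 F1)

lemma F_double: "F (2*n+1) = F n ^ 2 + F (n+1) ^ 2"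
  using F_add[of "n+1" n] by (simp add: power2_eq_square algebra_simps)

definition C :: "int \<Rightarrow> int" where
  "C i = F (i+1)^2 - F (i+1) * F i - F i ^ 2"

lemma C_step: "C (i+1) = - C i"
  using F_rec[of i] by (simp add: C_def power2_eq_square algebra_simps)

lemma C_sq: "C i ^ 2 = 1"
proof -
  have "C i ^ 2 = C 0 ^ 2"
    by (rule const_int[where h="\<lambda>i. C i ^ 2"]) (simp add: C_step)
  also have "\<dots> = 1" using F_rec[of 0] by (simp add: C_def F0 F1)
  finally show ?thesis .
qed

definition G :: "int \<Rightarrow> int" where
  "G n = F (2*n+1) * L (n-1) * L (n+2) + 6*n + 3"

lemma G_step: "G n - G (n-1) = 25 * F n ^ 4"
proof -
  define a where "a = F n"
  define b where "b = F (n+1)"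
  define s where "s = C n"
  have s: "b^2 - a*b - a^2 = s" unfolding s_def C_def a_def b_def by (simp add: algebra_simps)
  have s2: "s^2 = 1" unfolding s_def by (rule C_sq)
  have f1: "F (n-1) = b - a" using Fm1[of n] a_def b_def by simp
  have f2: "F (n+2) = a + b" using F_rec[of n] a_def b_def by simp
  have f3: "F (n+3) = a + 2*b" using F_rec[of "n+1"] f2 b_def by (simp add: add.assoc)
  have fm2: "F (n-2) = 2*a - b" using Fm1[of "n-1"] f1 a_def by simp
  have fm3: "F (n-3) = 2*b - 3*a" using Fm1[of "n-2"] f1 fm2 by simp
  have l1: "L (n-1) = 3*a - b" using L_F[of "n-1"] fm2 a_def by simp
  have l2: "L (n+2) = a + 3*b" using L_F[of "n+2"] f3 b_def by (simp add: algebra_simps)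
  have l3: "L (n-2) = 3*b - 4*a" using L_F[of "n-2"] fm3 f1 by simp
  have l4: "L (n+1) = 2*a + b" using L_F[of "n+1"] f2 a_def by (simp add: algebra_simps)
  have d1: "F (2*n+1) = a^2 + b^2" using F_double[of n] a_def b_def by simp
  have d2: "F (2*(n-1)+1) = (b-a)^2 + a^2" using F_double[of "n-1"] f1 a_def by simp
  have "G n - G (n-1) = (a^2+b^2)*(3*a-b)*(a+3*b) - ((b-a)^2+a^2)*(3*b-4*a)*(2*a+b) + 6"
  proof -
    have e: "n - 1 - 1 = n - 2" "n - 1 + 2 = n + 1" by simp_all
    show ?thesis unfolding G_def e d1 d2 l1 l2 l3 l4 by (simp add: algebra_simps)
  qed
  also have "\<dots> = 25 * a^4"
  proof -
    have "(a^2+b^2)*(3*a-b)*(a+3*b) - ((b-a)^2+a^2)*(3*b-4*a)*(2*a+b) + 6 - 25*a^4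
        = 6 - 6 * (b^2 - a*b - a^2)^2"
      by (simp add: power2_eq_square power4_eq_xxxx algebra_simps)
    then show ?thesis using s s2 by simp
  qed
  finally show ?thesis using a_def by simp
qed

lemma isum_step: "isum 1 n f - isum 1 (n-1) f = f n"
proof -
  consider "n \<ge> 1" | "n = 0" | "n < 0" by linarith
  then show ?thesis
  proof cases
    case 1
    have "{1..n} = insert n {1..n-1}" using 1 by auto
    then show ?thesis using 1 by (simp add: isum_def)
  next
    case 2 then show ?thesis by (simp add: isum_def)
  next
    case 3
    have "{n..0} = insert n {n+1..0}" using 3 by auto
    then show ?thesis using 3 by (simp add: isum_def)
  qed
qed

theorem corollary1:
  fixes n :: int
  shows "25 * isum 1 n (\<lambda>k. F k ^ 4) = F (2*n+1) * L (n-1) * L (n+2) + 6*n + 3"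
proof -
  have "25 * isum 1 n (\<lambda>k. F k ^ 4) - G n = 25 * isum 1 0 (\<lambda>k. F k ^ 4) - G 0"
  proof (rule const_int[where h="\<lambda>n. 25 * isum 1 n (\<lambda>k. F k ^ 4) - G n"])
    fix i
    show "25 * isum 1 (i + 1) (\<lambda>k. F k ^ 4) - G (i + 1) = 25 * isum 1 i (\<lambda>k. F k ^ 4) - G i"
      using isum_step[of "i+1" "\<lambda>k. F k ^ 4"] G_step[of "i+1"] by (simp add: algebra_simps)
  qed
  also have "\<dots> = 0"
    using L_F[of "-1"] L_F[of 2] F_rec[of 0] F_rec[of "-1"] F_rec[of 1] F_rec[of "-2"]
    by (simp add: isum_def G_def F0 F1)
  finally show ?thesis by (simp add: G_def)
qed

end
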